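(* For $n\ge2$ and $1\le\ell\le n-1$, let $t_{n,\ell}$ be the number of permutations $\sigma$ of $\{1,\dots,n\}$ avoiding both $1243$ and $1324$ such that $\sigma^{-1}(n)-\sigma^{-1}(1)=1$ (i.e., $1$ is immediately to the left of $n$) and $\sigma(1)=\ell$. Then for $n\ge3$, \[ t_{n,1}=t_{n,2}=2^{n-3}\quad\text{and}\quad t_{n,n-2}=t_{n,n-1}=\sum_{\ell=1}^{n-2}t_{n-1,\ell}. \]
   Context: A permutation avoids a pattern $p$ if no subsequence of its one-line notation is order-isomorphic to $p$. *)

theory Defs
  imports Main
begin

definition perms_of :: "nat \<Rightarrow> nat list set" where
  "perms_of n = {s. distinct s \<and> set s = {1..n}}"

definition contains :: "nat list \<Rightarrow> nat list \<Rightarrow> bool" where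
  "contains s p \<longleftrightarrow> (\<exists>idx :: nat \<Rightarrow> nat.
      (\<forall>a<length p. idx a < length s) \<and>
      (\<forall>a b. a < b \<and> b < length p \<longrightarrow> idx a < idx b) \<and>
      (\<forall>a<length p. \<forall>b<length p. (s ! idx a < s ! idx b \<longleftrightarrow> p ! a < p ! b)))"

definition avoids :: "nat list \<Rightarrow> nat list \<Rightarrow> bool" where
  "avoids s p \<longleftrightarrow> \<not> contains s p"

text \<open>Position (0-based) of value v in s; s ! (pos s v) = v when v is in s.\<close>
definition pos :: "nat list \<Rightarrow> nat \<Rightarrow> nat" where
  "pos s v = (LEAST i. i < length s \<and> s ! i = v)"

definition t :: "nat \<Rightarrow> nat \<Rightarrow> nat" where
  "t n l = card {s \<in> perms_of n. avoids s [1,2,4,3] \<and> avoids s [1,3,2,4] \<and>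
                  pos s n = pos s 1 + 1 \<and> s ! 0 = l}"

end

theory Submission
  imports Defs "HOL-Library.Sublist"
begin

lemma sorted_pred:
  assumes "sorted_wrt (<) (is::nat list)" "\<forall>j\<in>set is. 0 < j"
  shows "sorted_wrt (<) (map (\<lambda>i. i - 1) is)"
proof -
  have "sorted_wrt (\<lambda>x y. x - 1 < y - 1) is"
    by (rule sorted_wrt_mono_rel[OF _ assms(1)]) (use assms(2) in auto)
  then show ?thesis by (simp add: sorted_wrt_map)
qed

lemma subseq_of_idx:
  "sorted_wrt (<) is \<Longrightarrow> \<forall>i\<in>set is. i < length s \<Longrightarrow> subseq (map (nth s) is) s"
proof (induction s arbitrary: "is")
  case Nil
  then show ?case by (cases "is") auto
next
  case (Cons x s)
  show ?case
  proof (cases "is")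
    case Nil then show ?thesis by simp
  next
    case (Cons i is')
    show ?thesis
    proof (cases "i = 0")
      case True
      have pos: "\<forall>j\<in>set is'. 0 < j" using Cons.prems(1) Cons True by simp
      have srt: "sorted_wrt (<) (map (\<lambda>i. i - 1) is')"
        using Cons.prems(1) Cons pos by (intro sorted_pred) simp_all
      have bnd: "\<forall>j\<in>set (map (\<lambda>i. i - 1) is'). j < length s"
        using Cons.prems(2) Cons pos by auto
      have eq: "map (nth (x#s)) is' = map (nth s) (map (\<lambda>i. i - 1) is')"
        unfolding map_map by (rule map_cong[OF refl]) (use pos in \<open>auto simp: nth_Cons'\<close>)
      have "subseq (map (nth (x#s)) is') s" unfolding eq by (rule Cons.IH[OF srt bnd])
      then show ?thesis using Cons True by simp
    next
      case False
      have pos: "\<forall>j\<in>set is. 0 < j" using Cons.prems(1) Cons False by auto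
      have srt2: "sorted_wrt (<) (map (\<lambda>i. i - 1) is)"
        using Cons.prems(1) pos by (intro sorted_pred) simp_all
      have bnd2: "\<forall>j\<in>set (map (\<lambda>i. i - 1) is). j < length s"
        using Cons.prems(2) pos by auto
      have eq2: "map (nth (x#s)) is = map (nth s) (map (\<lambda>i. i - 1) is)"
        unfolding map_map by (rule map_cong[OF refl]) (use pos in \<open>auto simp: nth_Cons'\<close>)
      have "subseq (map (nth (x#s)) is) s" unfolding eq2 by (rule Cons.IH[OF srt2 bnd2])
      then show ?thesis by (rule list_emb_Cons)
    qed
  qed
qed

lemma idx_of_subseq:
  "subseq u s \<Longrightarrow> \<exists>is. sorted_wrt (<) is \<and> length is = length u \<and> (\<forall>i\<in>set is. i < length s) \<and> u = map (nth s) is"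
proof (induction rule: list_emb.induct)
  case (list_emb_Nil ys)
  then show ?case by (intro exI[of _ "[]"]) auto
next
  case (list_emb_Cons xs ys y)
  then obtain "is" where h: "sorted_wrt (<) is" "length is = length xs" "\<forall>i\<in>set is. i < length ys" "xs = map (nth ys) is" by blast
  have "sorted_wrt (<) (map Suc is)" using h(1) by (simp add: sorted_wrt_map)
  moreover have "map (nth (y#ys)) (map Suc is) = xs" using h(4) by simp
  ultimately show ?case using h(2,3) by (intro exI[of _ "map Suc is"]) auto
next
  case (list_emb_Cons2 x y xs ys)
  then obtain "is" where h: "sorted_wrt (<) is" "length is = length xs" "\<forall>i\<in>set is. i < length ys" "xs = map (nth ys) is" by blast
  have "sorted_wrt (<) (0 # map Suc is)" using h(1) by (simp add: sorted_wrt_map)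
  moreover have "map (nth (y#ys)) (0 # map Suc is) = x # xs" using h(4) list_emb_Cons2(1) by simp
  ultimately show ?case using h(2,3) by (intro exI[of _ "0 # map Suc is"]) auto
qed

lemma contains_iff:
  "contains s p \<longleftrightarrow> (\<exists>u. subseq u s \<and> length u = length p \<and>
     (\<forall>a<length p. \<forall>b<length p. u!a < u!b \<longleftrightarrow> p!a < p!b))"
proof
  assume "contains s p"
  then obtain idx where i1: "\<forall>a<length p. idx a < length s"
    and i2: "\<forall>a b. a < b \<and> b < length p \<longrightarrow> idx a < idx b"
    and i3: "\<forall>a<length p. \<forall>b<length p. (s ! idx a < s ! idx b \<longleftrightarrow> p ! a < p ! b)"
    unfolding contains_def by blast
  define "is" where "is = map idx [0..<length p]"
  have "sorted_wrt (<) is" unfolding sorted_wrt_iff_nth_less is_def using i2 by simp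
  moreover have "\<forall>i\<in>set is. i < length s" using i1 unfolding is_def by auto
  ultimately have sub: "subseq (map (nth s) is) s" by (rule subseq_of_idx)
  have len: "length (map (nth s) is) = length p" by (simp add: is_def)
  have cmp: "\<forall>a<length p. \<forall>b<length p. (map (nth s) is)!a < (map (nth s) is)!b \<longleftrightarrow> p!a < p!b"
    using i3 by (simp add: is_def)
  show "\<exists>u. subseq u s \<and> length u = length p \<and>
     (\<forall>a<length p. \<forall>b<length p. u!a < u!b \<longleftrightarrow> p!a < p!b)"
    using sub len cmp by blast
next
  assume "\<exists>u. subseq u s \<and> length u = length p \<and>
     (\<forall>a<length p. \<forall>b<length p. u!a < u!b \<longleftrightarrow> p!a < p!b)"
  then obtain u where u1: "subseq u s" and u2: "length u = length p" and
    u3: "\<forall>a<length p. \<forall>b<length p. u!a < u!b \<longleftrightarrow> p!a < p!b" by blast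
  obtain "is" where h: "sorted_wrt (<) is" "length is = length u" "\<forall>i\<in>set is. i < length s" "u = map (nth s) is"
    using idx_of_subseq[OF u1] by blast
  show "contains s p" unfolding contains_def
  proof (intro exI[of _ "nth is"] conjI allI impI)
    fix a assume "a < length p" then show "is ! a < length s" using h(2,3) u2 by simp
  next
    fix a b assume "a < b \<and> b < length p" then show "is ! a < is ! b"
      using h(1,2) u2 sorted_wrt_nth_less[OF h(1), of a b] by simp
  next
    fix a b assume ab: "a < length p" "b < length p"
    have "u!a = s!(is!a)" "u!b = s!(is!b)" using h(2,4) u2 ab by simp_all
    then show "(s ! (is ! a) < s ! (is ! b)) = (p ! a < p ! b)" using u3 ab by metis
  qed
qed

lemma len4: "length u = 4 \<Longrightarrow> u = [u!0, u!1, u!2, u!3]"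
  by (cases u; cases "tl u"; cases "tl (tl u)"; cases "tl (tl (tl u))"; auto)
lemma len3: "length u = 3 \<Longrightarrow> u = [u!0, u!1, u!2]"
  by (cases u; cases "tl u"; cases "tl (tl u)"; auto)

lemma all4: "(\<forall>a<(4::nat). P a) \<longleftrightarrow> P 0 \<and> P 1 \<and> P 2 \<and> P 3"
  by (auto simp: less_Suc_eq numeral_eq_Suc)
lemma all3: "(\<forall>a<(3::nat). P a) \<longleftrightarrow> P 0 \<and> P 1 \<and> P 2"
  by (auto simp: less_Suc_eq numeral_eq_Suc)

definition occ1243 where "occ1243 s \<longleftrightarrow> (\<exists>a b c d. subseq [a,b,c,d] s \<and> a<b \<and> b<d \<and> d<(c::nat))"
definition occ1324 where "occ1324 s \<longleftrightarrow> (\<exists>a b c d. subseq [a,b,c,d] s \<and> a<c \<and> c<b \<and> b<(d::nat))"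
definition occ132 where "occ132 s \<longleftrightarrow> (\<exists>a b c. subseq [a,b,c] s \<and> a<c \<and> c<(b::nat))"
definition occ213 where "occ213 s \<longleftrightarrow> (\<exists>a b c. subseq [a,b,c] s \<and> b<a \<and> a<(c::nat))"

lemma c1243: "contains s [1,2,4,3] \<longleftrightarrow> occ1243 s"
proof
  assume "contains s [1,2,4,3]"
  then obtain u where h: "subseq u s" "length u = 4" "\<forall>a<4. \<forall>b<4. u!a < u!b \<longleftrightarrow> [1,2,4,3::nat]!a < [1,2,4,3::nat]!b"
    unfolding contains_iff by auto
  from h(2) obtain a b c d where "u = [a,b,c,d]"
    by (metis len4)
  with h show "occ1243 s" unfolding occ1243_def all4
    by (intro exI[of _ a] exI[of _ b] exI[of _ c] exI[of _ d]) simp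
next
  assume "occ1243 s"
  then obtain a b c d where "subseq [a,b,c,d] s" "a<b" "b<d" "d<c" unfolding occ1243_def by blast
  then show "contains s [1,2,4,3]" unfolding contains_iff
    by (intro exI[of _ "[a,b,c,d]"]) (auto simp: less_Suc_eq_0_disj)
qed

lemma c1324: "contains s [1,3,2,4] \<longleftrightarrow> occ1324 s"
proof
  assume "contains s [1,3,2,4]"
  then obtain u where h: "subseq u s" "length u = 4" "\<forall>a<4. \<forall>b<4. u!a < u!b \<longleftrightarrow> [1,3,2,4::nat]!a < [1,3,2,4::nat]!b"
    unfolding contains_iff by auto
  from h(2) obtain a b c d where "u = [a,b,c,d]"
    by (metis len4)
  with h show "occ1324 s" unfolding occ1324_def all4
    by (intro exI[of _ a] exI[of _ b] exI[of _ c] exI[of _ d]) simp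
next
  assume "occ1324 s"
  then obtain a b c d where "subseq [a,b,c,d] s" "a<c" "c<b" "b<d" unfolding occ1324_def by blast
  then show "contains s [1,3,2,4]" unfolding contains_iff
    by (intro exI[of _ "[a,b,c,d]"]) (auto simp: less_Suc_eq_0_disj)
qed


definition Pa where "Pa s \<longleftrightarrow> \<not> occ1243 s \<and> \<not> occ1324 s"
definition Qa where "Qa s \<longleftrightarrow> \<not> occ132 s \<and> \<not> occ213 s"

lemma P_avoids: "(avoids s [1,2,4,3] \<and> avoids s [1,3,2,4]) \<longleftrightarrow> Pa s"
  unfolding avoids_def Pa_def c1243 c1324 by simp

lemma subseq_set: "subseq u s \<Longrightarrow> set u \<subseteq> set s"
  by (induction rule: list_emb.induct) auto

lemma subseq_trans: "subseq u v \<Longrightarrow> subseq v w \<Longrightarrow> subseq u w"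
  by (rule subseq_order.order_trans)

lemma occ_sub:
  assumes "subseq s' s"
  shows "occ1243 s' \<Longrightarrow> occ1243 s" "occ1324 s' \<Longrightarrow> occ1324 s"
        "occ132 s' \<Longrightarrow> occ132 s" "occ213 s' \<Longrightarrow> occ213 s"
proof -
  show "occ1243 s' \<Longrightarrow> occ1243 s" unfolding occ1243_def using subseq_trans[OF _ assms] by blast
  show "occ1324 s' \<Longrightarrow> occ1324 s" unfolding occ1324_def using subseq_trans[OF _ assms] by blast
  show "occ132 s' \<Longrightarrow> occ132 s" unfolding occ132_def using subseq_trans[OF _ assms] by blast
  show "occ213 s' \<Longrightarrow> occ213 s" unfolding occ213_def using subseq_trans[OF _ assms] by blast
qed

lemma Pa_sub: "subseq s' s \<Longrightarrow> Pa s \<Longrightarrow> Pa s'"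
  unfolding Pa_def using occ_sub by blast

lemma Qa_sub: "subseq s' s \<Longrightarrow> Qa s \<Longrightarrow> Qa s'"
  unfolding Qa_def using occ_sub by blast

lemma occ1243_132: "occ1243 s \<Longrightarrow> occ132 s"
proof -
  assume "occ1243 s"
  then obtain a b c d where h: "subseq [a,b,c,d] s" "a<b" "b<d" "d<c" unfolding occ1243_def by blast
  from h(1) have "subseq [b,c,d] s" by (rule subseq_Cons')
  then show "occ132 s" unfolding occ132_def using h by blast
qed

lemma occ1324_213: "occ1324 s \<Longrightarrow> occ213 s"
proof -
  assume "occ1324 s"
  then obtain a b c d where h: "subseq [a,b,c,d] s" "a<c" "c<b" "b<d" unfolding occ1324_def by blast
  from h(1) have "subseq [b,c,d] s" by (rule subseq_Cons')
  then show "occ213 s" unfolding occ213_def using h by blast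
qed

lemma Qa_Pa: "Qa s \<Longrightarrow> Pa s"
  unfolding Pa_def Qa_def using occ1243_132 occ1324_213 by blast

lemma Qa_short: assumes "length s < 3" shows "Qa s"
proof -
  have "\<not> subseq [a,b,c] s" for a b c
  proof
    assume "subseq [a,b,c] s"
    then have "length [a,b,c] \<le> length s" by (rule list_emb_length)
    with assms show False by simp
  qed
  then show ?thesis unfolding Qa_def occ132_def occ213_def by blast
qed

lemma subseq_Cons_right:
  "subseq (a#u) (x#s) \<longleftrightarrow> (a = x \<and> subseq u s) \<or> subseq (a#u) s"
proof (cases "a = x")
  case True
  then show ?thesis using subseq_Cons'[of a u s] by auto
next
  case False
  then show ?thesis by simp
qed

lemma subseq_filter_iff:
  "subseq u (filter P s) \<longleftrightarrow> subseq u s \<and> (\<forall>v\<in>set u. P v)"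
proof
  assume "subseq u (filter P s)"
  then have "subseq u s" using subseq_trans subseq_filter_left by blast
  moreover have "set u \<subseteq> set (filter P s)" using subseq_set \<open>subseq u (filter P s)\<close> by blast
  ultimately show "subseq u s \<and> (\<forall>v\<in>set u. P v)" by auto
next
  assume h: "subseq u s \<and> (\<forall>v\<in>set u. P v)"
  then have "subseq (filter P u) (filter P s)" using subseq_filter by blast
  moreover have "filter P u = u" using h by simp
  ultimately show "subseq u (filter P s)" by simp
qed

lemma occ1243_Cons: "occ1243 (x#s) \<longleftrightarrow> occ1243 s \<or> occ132 (filter (\<lambda>v. x < v) s)"
proof
  assume "occ1243 (x#s)"
  then obtain a b c d where h: "subseq [a,b,c,d] (x#s)" "a<b" "b<d" "d<c" unfolding occ1243_def by blast
  from h(1) have "(a = x \<and> subseq [b,c,d] s) \<or> subseq [a,b,c,d] s" by (simp only: subseq_Cons_right)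
  then show "occ1243 s \<or> occ132 (filter (\<lambda>v. x < v) s)"
  proof
    assume h2: "a = x \<and> subseq [b,c,d] s"
    then have "subseq [b,c,d] (filter (\<lambda>v. x < v) s)" using h by (simp add: subseq_filter_iff)
    then show ?thesis unfolding occ132_def using h by blast
  next
    assume "subseq [a,b,c,d] s" then show ?thesis unfolding occ1243_def using h by blast
  qed
next
  assume "occ1243 s \<or> occ132 (filter (\<lambda>v. x < v) s)"
  then show "occ1243 (x#s)"
  proof
    assume "occ1243 s" then show ?thesis unfolding occ1243_def by (meson list_emb_Cons)
  next
    assume "occ132 (filter (\<lambda>v. x < v) s)"
    then obtain b c d where h: "subseq [b,c,d] (filter (\<lambda>v. x < v) s)" "b<d" "d<c" unfolding occ132_def by blast
    then have "subseq [b,c,d] s" "x < b" by (simp_all add: subseq_filter_iff)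
    then have "subseq [x,b,c,d] (x#s)" by simp
    then show ?thesis unfolding occ1243_def using h \<open>x<b\<close> by blast
  qed
qed

lemma occ1324_Cons: "occ1324 (x#s) \<longleftrightarrow> occ1324 s \<or> occ213 (filter (\<lambda>v. x < v) s)"
proof
  assume "occ1324 (x#s)"
  then obtain a b c d where h: "subseq [a,b,c,d] (x#s)" "a<c" "c<b" "b<d" unfolding occ1324_def by blast
  from h(1) have "(a = x \<and> subseq [b,c,d] s) \<or> subseq [a,b,c,d] s" by (simp only: subseq_Cons_right)
  then show "occ1324 s \<or> occ213 (filter (\<lambda>v. x < v) s)"
  proof
    assume h2: "a = x \<and> subseq [b,c,d] s"
    then have "subseq [b,c,d] (filter (\<lambda>v. x < v) s)" using h by (simp add: subseq_filter_iff)
    then show ?thesis unfolding occ213_def using h by blast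
  next
    assume "subseq [a,b,c,d] s" then show ?thesis unfolding occ1324_def using h by blast
  qed
next
  assume "occ1324 s \<or> occ213 (filter (\<lambda>v. x < v) s)"
  then show "occ1324 (x#s)"
  proof
    assume "occ1324 s" then show ?thesis unfolding occ1324_def by (meson list_emb_Cons)
  next
    assume "occ213 (filter (\<lambda>v. x < v) s)"
    then obtain b c d where h: "subseq [b,c,d] (filter (\<lambda>v. x < v) s)" "c<b" "b<d" unfolding occ213_def by blast
    then have "subseq [b,c,d] s" "x < c" by (simp_all add: subseq_filter_iff)
    then have "subseq [x,b,c,d] (x#s)" by simp
    then show ?thesis unfolding occ1324_def using h \<open>x<c\<close> by blast
  qed
qed

lemma L1: "Pa (x # s) \<longleftrightarrow> Pa s \<and> Qa (filter (\<lambda>v. x < v) s)"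
  unfolding Pa_def Qa_def occ1243_Cons occ1324_Cons by blast

lemma Qmax: assumes "\<forall>v\<in>set s. v < m" shows "Qa (m # s) \<longleftrightarrow> Qa s"
proof -
  have "occ132 (m#s) \<longleftrightarrow> occ132 s"
  proof
    assume "occ132 (m#s)"
    then obtain a b c where h: "subseq [a,b,c] (m#s)" "a<c" "c<b" unfolding occ132_def by blast
    from h(1) have "(a = m \<and> subseq [b,c] s) \<or> subseq [a,b,c] s" by (simp only: subseq_Cons_right)
    moreover have "a = m \<Longrightarrow> subseq [b,c] s \<Longrightarrow> False"
      using assms h subseq_set by fastforce
    ultimately show "occ132 s" unfolding occ132_def using h by blast
  qed (unfold occ132_def, meson list_emb_Cons)
  moreover have "occ213 (m#s) \<longleftrightarrow> occ213 s"
  proof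
    assume "occ213 (m#s)"
    then obtain a b c where h: "subseq [a,b,c] (m#s)" "b<a" "a<c" unfolding occ213_def by blast
    from h(1) have "(a = m \<and> subseq [b,c] s) \<or> subseq [a,b,c] s" by (simp only: subseq_Cons_right)
    moreover have "a = m \<Longrightarrow> subseq [b,c] s \<Longrightarrow> False"
      using assms h subseq_set by fastforce
    ultimately show "occ213 s" unfolding occ213_def using h by blast
  qed (unfold occ213_def, meson list_emb_Cons)
  ultimately show ?thesis unfolding Qa_def by simp
qed

lemma subseq_map_D: "subseq u (map f s) \<Longrightarrow> \<exists>v. subseq v s \<and> u = map f v"
proof (induction s arbitrary: u)
  case Nil
  then have "u = []" by simp
  moreover have "subseq [] ([]::'b list)" by simp
  ultimately show ?case by (intro exI[of _ "[]"]) simp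
next
  case (Cons x s)
  note IH = Cons.IH
  show ?case
  proof (cases u)
    case Nil then show ?thesis by (intro exI[of _ "[]"]) simp
  next
    case (Cons a u')
    note u = this
    from Cons.prems have "subseq (a#u') (f x # map f s)" unfolding u by (simp only: list.map)
    then have "(a = f x \<and> subseq u' (map f s)) \<or> subseq (a#u') (map f s)"
      by (rule subseq_Cons_right[THEN iffD1])
    then show ?thesis
    proof
      assume h: "a = f x \<and> subseq u' (map f s)"
      then have "subseq u' (map f s)" by blast
      from IH[OF this] obtain v where v: "subseq v s \<and> u' = map f v" ..
      have "subseq (x # v) (x # s)" using v by simp
      moreover have "u = map f (x # v)" using u h v by simp
      ultimately show ?thesis by (intro exI[of _ "x # v"] conjI)
    next
      assume "subseq (a#u') (map f s)"
      from IH[OF this] obtain v where v: "subseq v s \<and> a#u' = map f v" ..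
      have "subseq v (x # s)" using v by (intro list_emb_Cons) simp
      moreover have "u = map f v" using v u by simp
      ultimately show ?thesis by (intro exI[of _ v] conjI)
    qed
  qed
qed

lemma subseq_map_iff: "subseq u (map f s) \<longleftrightarrow> (\<exists>v. subseq v s \<and> u = map f v)"
proof
  assume "subseq u (map f s)" then show "\<exists>v. subseq v s \<and> u = map f v" by (rule subseq_map_D)
next
  assume "\<exists>v. subseq v s \<and> u = map f v"
  then obtain v where "subseq v s" "u = map f v" by blast
  then show "subseq u (map f s)" by (simp add: subseq_map)
qed

definition ordiso :: "(nat \<Rightarrow> nat) \<Rightarrow> nat set \<Rightarrow> bool" where
  "ordiso f S \<longleftrightarrow> (\<forall>x\<in>S. \<forall>y\<in>S. f x < f y \<longleftrightarrow> x < y)"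

lemma map_eq3E: assumes "[a,b,c] = map f v"
  obtains a' b' c' where "v = [a',b',c']" "a = f a'" "b = f b'" "c = f c'"
proof -
  have l: "length v = 3" using arg_cong[OF assms, of length] by simp
  have e: "v = [v!0, v!1, v!2]" using l by (rule len3)
  have "[a,b,c] = [f (v!0), f (v!1), f (v!2)]" using assms by (subst (asm) e) simp
  then show thesis using that[of "v!0" "v!1" "v!2"] e by simp
qed

lemma map_eq4E: assumes "[a,b,c,d] = map f v"
  obtains a' b' c' d' where "v = [a',b',c',d']" "a = f a'" "b = f b'" "c = f c'" "d = f d'"
proof -
  have l: "length v = 4" using arg_cong[OF assms, of length] by simp
  have e: "v = [v!0, v!1, v!2, v!3]" using l by (rule len4)
  have "[a,b,c,d] = [f (v!0), f (v!1), f (v!2), f (v!3)]" using assms by (subst (asm) e) simp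
  then show thesis using that[of "v!0" "v!1" "v!2" "v!3"] e by simp
qed

lemma occ132_map: assumes "ordiso f (set s)" shows "occ132 (map f s) \<longleftrightarrow> occ132 s"
proof
  assume "occ132 (map f s)"
  then obtain a b c where h0: "subseq [a,b,c] (map f s)" "a<c" "c<b"
    unfolding occ132_def by blast
  from subseq_map_D[OF h0(1)] obtain v where v: "subseq v s \<and> [a,b,c] = map f v" ..
  then have h: "subseq v s" "[a,b,c] = map f v" "a<c" "c<b" using h0 by simp_all
  from h(2) obtain a' b' c' where h2: "v = [a',b',c']" "a = f a'" "b = f b'" "c = f c'"
    by (rule map_eq3E)
  have s: "a' \<in> set s" "b' \<in> set s" "c' \<in> set s" using subseq_set[OF h(1)] unfolding h2(1) by auto
  have "a' < c'" using assms s h(3) h2(2-) unfolding ordiso_def by simp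
  moreover have "c' < b'" using assms s h(4) h2(2-) unfolding ordiso_def by simp
  moreover have "subseq [a',b',c'] s" using h(1) h2(1) by simp
  ultimately show "occ132 s" unfolding occ132_def by blast
next
  assume "occ132 s"
  then obtain a b c where h: "subseq [a,b,c] s" "a<c" "c<b" unfolding occ132_def by blast
  have s: "a \<in> set s" "b \<in> set s" "c \<in> set s" using subseq_set[OF h(1)] by auto
  have "subseq (map f [a,b,c]) (map f s)" by (rule subseq_map[OF h(1)])
  then have "subseq [f a, f b, f c] (map f s)" by simp
  moreover have "f a < f c" using assms s h(2) unfolding ordiso_def by simp
  moreover have "f c < f b" using assms s h(3) unfolding ordiso_def by simp
  ultimately show "occ132 (map f s)" unfolding occ132_def by blast
qed

lemma occ213_map: assumes "ordiso f (set s)" shows "occ213 (map f s) \<longleftrightarrow> occ213 s"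
proof
  assume "occ213 (map f s)"
  then obtain a b c where h0: "subseq [a,b,c] (map f s)" "b<a" "a<c"
    unfolding occ213_def by blast
  from subseq_map_D[OF h0(1)] obtain v where v: "subseq v s \<and> [a,b,c] = map f v" ..
  then have h: "subseq v s" "[a,b,c] = map f v" "b<a" "a<c" using h0 by simp_all
  from h(2) obtain a' b' c' where h2: "v = [a',b',c']" "a = f a'" "b = f b'" "c = f c'"
    by (rule map_eq3E)
  have s: "a' \<in> set s" "b' \<in> set s" "c' \<in> set s" using subseq_set[OF h(1)] unfolding h2(1) by auto
  have "b' < a'" using assms s h(3) h2(2-) unfolding ordiso_def by simp
  moreover have "a' < c'" using assms s h(4) h2(2-) unfolding ordiso_def by simp
  moreover have "subseq [a',b',c'] s" using h(1) h2(1) by simp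
  ultimately show "occ213 s" unfolding occ213_def by blast
next
  assume "occ213 s"
  then obtain a b c where h: "subseq [a,b,c] s" "b<a" "a<c" unfolding occ213_def by blast
  have s: "a \<in> set s" "b \<in> set s" "c \<in> set s" using subseq_set[OF h(1)] by auto
  have "subseq (map f [a,b,c]) (map f s)" by (rule subseq_map[OF h(1)])
  then have "subseq [f a, f b, f c] (map f s)" by simp
  moreover have "f b < f a" using assms s h(2) unfolding ordiso_def by simp
  moreover have "f a < f c" using assms s h(3) unfolding ordiso_def by simp
  ultimately show "occ213 (map f s)" unfolding occ213_def by blast
qed

lemma occ1243_map: assumes "ordiso f (set s)" shows "occ1243 (map f s) \<longleftrightarrow> occ1243 s"
proof
  assume "occ1243 (map f s)"
  then obtain a b c d where h0: "subseq [a,b,c,d] (map f s)" "a<b" "b<d" "d<c"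
    unfolding occ1243_def by blast
  from subseq_map_D[OF h0(1)] obtain v where v: "subseq v s \<and> [a,b,c,d] = map f v" ..
  then have h: "subseq v s" "[a,b,c,d] = map f v" "a<b" "b<d" "d<c" using h0 by simp_all
  from h(2) obtain a' b' c' d' where h2: "v = [a',b',c',d']" "a = f a'" "b = f b'" "c = f c'" "d = f d'"
    by (rule map_eq4E)
  have s: "a' \<in> set s" "b' \<in> set s" "c' \<in> set s" "d' \<in> set s" using subseq_set[OF h(1)] unfolding h2(1) by auto
  have "a' < b'" using assms s h(3) h2(2-) unfolding ordiso_def by simp
  moreover have "b' < d'" using assms s h(4) h2(2-) unfolding ordiso_def by simp
  moreover have "d' < c'" using assms s h(5) h2(2-) unfolding ordiso_def by simp
  moreover have "subseq [a',b',c',d'] s" using h(1) h2(1) by simp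
  ultimately show "occ1243 s" unfolding occ1243_def by blast
next
  assume "occ1243 s"
  then obtain a b c d where h: "subseq [a,b,c,d] s" "a<b" "b<d" "d<c" unfolding occ1243_def by blast
  have s: "a \<in> set s" "b \<in> set s" "c \<in> set s" "d \<in> set s" using subseq_set[OF h(1)] by auto
  have "subseq (map f [a,b,c,d]) (map f s)" by (rule subseq_map[OF h(1)])
  then have "subseq [f a, f b, f c, f d] (map f s)" by simp
  moreover have "f a < f b" using assms s h(2) unfolding ordiso_def by simp
  moreover have "f b < f d" using assms s h(3) unfolding ordiso_def by simp
  moreover have "f d < f c" using assms s h(4) unfolding ordiso_def by simp
  ultimately show "occ1243 (map f s)" unfolding occ1243_def by blast
qed

lemma occ1324_map: assumes "ordiso f (set s)" shows "occ1324 (map f s) \<longleftrightarrow> occ1324 s"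
proof
  assume "occ1324 (map f s)"
  then obtain a b c d where h0: "subseq [a,b,c,d] (map f s)" "a<c" "c<b" "b<d"
    unfolding occ1324_def by blast
  from subseq_map_D[OF h0(1)] obtain v where v: "subseq v s \<and> [a,b,c,d] = map f v" ..
  then have h: "subseq v s" "[a,b,c,d] = map f v" "a<c" "c<b" "b<d" using h0 by simp_all
  from h(2) obtain a' b' c' d' where h2: "v = [a',b',c',d']" "a = f a'" "b = f b'" "c = f c'" "d = f d'"
    by (rule map_eq4E)
  have s: "a' \<in> set s" "b' \<in> set s" "c' \<in> set s" "d' \<in> set s" using subseq_set[OF h(1)] unfolding h2(1) by auto
  have "a' < c'" using assms s h(3) h2(2-) unfolding ordiso_def by simp
  moreover have "c' < b'" using assms s h(4) h2(2-) unfolding ordiso_def by simp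
  moreover have "b' < d'" using assms s h(5) h2(2-) unfolding ordiso_def by simp
  moreover have "subseq [a',b',c',d'] s" using h(1) h2(1) by simp
  ultimately show "occ1324 s" unfolding occ1324_def by blast
next
  assume "occ1324 s"
  then obtain a b c d where h: "subseq [a,b,c,d] s" "a<c" "c<b" "b<d" unfolding occ1324_def by blast
  have s: "a \<in> set s" "b \<in> set s" "c \<in> set s" "d \<in> set s" using subseq_set[OF h(1)] by auto
  have "subseq (map f [a,b,c,d]) (map f s)" by (rule subseq_map[OF h(1)])
  then have "subseq [f a, f b, f c, f d] (map f s)" by simp
  moreover have "f a < f c" using assms s h(2) unfolding ordiso_def by simp
  moreover have "f c < f b" using assms s h(3) unfolding ordiso_def by simp
  moreover have "f b < f d" using assms s h(4) unfolding ordiso_def by simp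
  ultimately show "occ1324 (map f s)" unfolding occ1324_def by blast
qed

lemma Qa_map: "ordiso f (set s) \<Longrightarrow> Qa (map f s) \<longleftrightarrow> Qa s"
  unfolding Qa_def using occ132_map occ213_map by blast

lemma Pa_map: "ordiso f (set s) \<Longrightarrow> Pa (map f s) \<longleftrightarrow> Pa s"
  unfolding Pa_def using occ1243_map occ1324_map by blast

lemma min_ins:
  assumes "\<forall>v\<in>set \<alpha> \<union> set \<gamma>. y < v" "Qa (\<alpha> @ \<gamma>)"
  shows "Pa (\<alpha> @ y # \<gamma>)"
  using assms
proof (induction \<alpha>)
  case Nil
  have f: "filter (\<lambda>v. y < v) \<gamma> = \<gamma>" using Nil.prems(1) by (intro filter_True) simp
  have "Qa \<gamma>" using Nil.prems(2) by simp
  then have "Pa \<gamma> \<and> Qa (filter (\<lambda>v. y < v) \<gamma>)" unfolding f using Qa_Pa by blast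
  then show ?case using L1[of y \<gamma>] by simp
next
  case (Cons x \<alpha>)
  have sub1: "subseq (\<alpha> @ \<gamma>) (x # \<alpha> @ \<gamma>)" by (intro list_emb_Cons) simp
  have q0: "Qa (x # \<alpha> @ \<gamma>)" using Cons.prems(2) by simp
  have q: "Qa (\<alpha> @ \<gamma>)" by (rule Qa_sub[OF sub1 q0])
  have a1: "\<forall>v\<in>set \<alpha> \<union> set \<gamma>. y < v" using Cons.prems(1) by simp
  have p1: "Pa (\<alpha> @ y # \<gamma>)" by (rule Cons.IH[OF a1 q])
  have "x > y" using Cons.prems(1) by simp
  then have feq: "filter (\<lambda>v. x < v) (\<alpha> @ y # \<gamma>) = filter (\<lambda>v. x < v) (\<alpha> @ \<gamma>)" by simp
  have sub2: "subseq (filter (\<lambda>v. x < v) (\<alpha> @ \<gamma>)) (\<alpha> @ \<gamma>)" by (rule subseq_filter_left)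
  have "Qa (filter (\<lambda>v. x < v) (\<alpha> @ \<gamma>))" by (rule Qa_sub[OF sub2 q])
  then have "Qa (filter (\<lambda>v. x < v) (\<alpha> @ y # \<gamma>))" unfolding feq .
  then have "Pa (x # (\<alpha> @ y # \<gamma>))" using p1 L1[of x "\<alpha> @ y # \<gamma>"] by simp
  then show ?case by simp
qed


lemma sub_split: "subseq u (X @ y # Z) \<Longrightarrow> subseq u (X @ Z) \<or> (\<exists>u1 u2. u = u1 @ y # u2 \<and> subseq u1 X \<and> subseq u2 Z)"
proof -
  assume "subseq u (X @ y # Z)"
  then obtain u1 w where h: "u = u1 @ w" "subseq u1 X" "subseq w (y # Z)" by (rule subseq_appendE)
  show ?thesis
  proof (cases w)
    case Nil
    then have "subseq u (X @ Z)" using h by (simp add: subseq_rev_drop_many)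
    then show ?thesis ..
  next
    case (Cons w0 w')
    show ?thesis
    proof (cases "w0 = y")
      case True
      then have "subseq w' Z" using h(3) Cons by simp
      then have "u = u1 @ y # w' \<and> subseq u1 X \<and> subseq w' Z" using h True Cons by simp
      then show ?thesis by blast
    next
      case False
      then have "subseq w Z" using h(3) Cons by simp
      then have "subseq u (X @ Z)" using h by (simp add: list_emb_append_mono)
      then show ?thesis ..
    qed
  qed
qed

lemma list3_split: "[a,b,c] = u1 @ y # u2 \<longleftrightarrow>
   (u1 = [] \<and> a = y \<and> u2 = [b,c]) \<or> (u1 = [a] \<and> b = y \<and> u2 = [c]) \<or> (u1 = [a,b] \<and> c = y \<and> u2 = [])"
  by (cases u1; cases "tl u1"; cases "tl (tl u1)"; auto)

lemma subseq_single: "subseq w [x] \<Longrightarrow> w = [] \<or> w = [x]"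
  by (cases w) (auto split: if_splits)

lemma QA:
  assumes tau: "\<tau> = \<alpha> @ m # \<beta>" and dist: "distinct \<tau>" and st: "set \<tau> = {1..m}" and m2: "m \<ge> 2"
  shows "Qa \<tau> \<longleftrightarrow> Qa (\<alpha> @ \<beta>) \<and> (\<alpha> = [] \<or> last \<alpha> = m - 1)"
proof -
  have mA: "m \<notin> set \<alpha>" and mB: "m \<notin> set \<beta>" and dAB: "set \<alpha> \<inter> set \<beta> = {}"
    using dist tau by auto
  have le: "\<And>v. v \<in> set \<tau> \<Longrightarrow> v \<le> m" using st by auto
  have sub: "subseq (\<alpha> @ \<beta>) \<tau>" unfolding tau subseq_append' by (intro list_emb_Cons) simp
  show ?thesis
  proof
    assume q: "Qa \<tau>"
    have q1: "Qa (\<alpha> @ \<beta>)" by (rule Qa_sub[OF sub q])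
    have "\<alpha> = [] \<or> last \<alpha> = m - 1"
    proof (rule ccontr)
      assume "\<not> (\<alpha> = [] \<or> last \<alpha> = m - 1)"
      then have ne: "\<alpha> \<noteq> []" and la: "last \<alpha> \<noteq> m - 1" by auto
      define a where "a = last \<alpha>"
      define \<alpha>' where "\<alpha>' = butlast \<alpha>"
      have aeq: "\<alpha> = \<alpha>' @ [a]" using ne unfolding a_def \<alpha>'_def by simp
      have t2: "\<tau> = \<alpha>' @ a # m # \<beta>" using tau aeq by simp
      have "a \<in> set \<tau>" using t2 by simp
      then have "a \<le> m" using le by blast
      moreover have "a \<noteq> m" using mA aeq by auto
      ultimately have am: "a < m - 1" using la unfolding a_def by linarith
      have "m - 1 \<in> set \<tau>" using st m2 by auto
      then have "m - 1 \<in> set \<alpha>' \<or> m - 1 \<in> set \<beta>" using t2 am m2 by auto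
      then show False
      proof
        assume "m - 1 \<in> set \<alpha>'"
        then have s1: "subseq [m-1] \<alpha>'" by (simp add: subseq_singleton_left)
        have s2: "subseq [a, m] (a # m # \<beta>)" by simp
        have "subseq ([m-1] @ [a, m]) (\<alpha>' @ a # m # \<beta>)" by (rule list_emb_append_mono[OF s1 s2])
        then have "subseq [m-1, a, m] \<tau>" using t2 by simp
        then have "occ213 \<tau>" unfolding occ213_def using am m2 by (intro exI[of _ "m-1"] exI[of _ a] exI[of _ m]) simp
        then show False using q unfolding Qa_def by simp
      next
        assume "m - 1 \<in> set \<beta>"
        then have "subseq [m-1] \<beta>" by (simp add: subseq_singleton_left)
        then have s2: "subseq [a, m, m-1] (a # m # \<beta>)" by simp
        have s1: "subseq [] \<alpha>'" by simp
        have "subseq ([] @ [a, m, m-1]) (\<alpha>' @ a # m # \<beta>)" by (rule list_emb_append_mono[OF s1 s2])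
        then have "subseq [a, m, m-1] \<tau>" using t2 by simp
        then have "occ132 \<tau>" unfolding occ132_def using am m2 by (intro exI[of _ a] exI[of _ m] exI[of _ "m-1"]) simp
        then show False using q unfolding Qa_def by simp
      qed
    qed
    then show "Qa (\<alpha> @ \<beta>) \<and> (\<alpha> = [] \<or> last \<alpha> = m - 1)" using q1 by simp
  next
    assume h: "Qa (\<alpha> @ \<beta>) \<and> (\<alpha> = [] \<or> last \<alpha> = m - 1)"
    then have q1: "Qa (\<alpha> @ \<beta>)" by simp
    show "Qa \<tau>"
    proof (cases "\<alpha> = []")
      case True
      have "\<forall>v\<in>set \<beta>. v < m"
      proof
        fix v assume v: "v \<in> set \<beta>"
        then have "v \<in> set \<tau>" "v \<noteq> m" using tau mB by auto
        then show "v < m" using le[of v] by simp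
      qed
      then show ?thesis using Qmax q1 True tau by simp
    next
      case False
      then have la: "last \<alpha> = m - 1" using h by simp
      define \<alpha>' where "\<alpha>' = butlast \<alpha>"
      have aeq: "\<alpha> = \<alpha>' @ [m-1]" using False la unfolding \<alpha>'_def by (metis append_butlast_last_id)
      have t2: "\<tau> = (\<alpha>' @ [m-1]) @ m # \<beta>" using tau aeq by simp
      have ab: "\<alpha> @ \<beta> = \<alpha>' @ (m-1) # \<beta>" using aeq by simp
      have d2: "distinct (\<alpha>' @ (m-1) # m # \<beta>)" using dist t2 by simp
      then have m1A: "m - 1 \<notin> set \<alpha>'" and m1B: "m - 1 \<notin> set \<beta>" and mA': "m \<notin> set \<alpha>'" by auto
      have n132: "\<not> occ132 \<tau>"
      proof
        assume "occ132 \<tau>"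
        then obtain a b c where o: "subseq [a,b,c] \<tau>" "a<c" "c<b" unfolding occ132_def by blast
        have sabc: "a \<in> set \<tau>" "b \<in> set \<tau>" "c \<in> set \<tau>" using subseq_set[OF o(1)] by auto
        from o(1) have "subseq [a,b,c] ((\<alpha>' @ [m-1]) @ m # \<beta>)" using t2 by simp
        from sub_split[OF this] show False
        proof
          assume "subseq [a,b,c] ((\<alpha>' @ [m-1]) @ \<beta>)"
          then have "occ132 (\<alpha> @ \<beta>)" unfolding occ132_def aeq using o by auto
          then show False using q1 unfolding Qa_def by simp
        next
          assume "\<exists>u1 u2. [a,b,c] = u1 @ m # u2 \<and> subseq u1 (\<alpha>' @ [m-1]) \<and> subseq u2 \<beta>"
          then obtain u1 u2 where u: "[a,b,c] = u1 @ m # u2" "subseq u1 (\<alpha>' @ [m-1])" "subseq u2 \<beta>" by blast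
          from u(1) have "(u1 = [] \<and> a = m \<and> u2 = [b,c]) \<or> (u1 = [a] \<and> b = m \<and> u2 = [c]) \<or> (u1 = [a,b] \<and> c = m \<and> u2 = [])"
            by (simp only: list3_split)
          then show False
          proof (elim disjE conjE)
            assume "a = m" then show False using o le sabc by force
          next
            assume "c = m" then show False using o le sabc by force
          next
            assume u1: "u1 = [a]" and bm: "b = m" and u2: "u2 = [c]"
            have cB: "c \<in> set \<beta>" using u(3) u2 by (simp add: subseq_singleton_left)
            have aX: "a \<in> set \<alpha>' \<or> a = m - 1" using u(2) u1 by (auto simp: subseq_singleton_left)
            have "c \<noteq> m - 1" using cB m1B by auto
            moreover have "c < m" using o bm by simp
            ultimately have cm: "c < m - 1" by simp
            then have aA: "a \<in> set \<alpha>'" using aX o by auto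
            have s1: "subseq [a] \<alpha>'" using aA by (simp add: subseq_singleton_left)
            have s2: "subseq [m-1, c] ((m-1) # \<beta>)" using cB by (simp add: subseq_singleton_left)
            have "subseq ([a] @ [m-1, c]) (\<alpha>' @ (m-1) # \<beta>)" by (rule list_emb_append_mono[OF s1 s2])
            then have "occ132 (\<alpha> @ \<beta>)" unfolding occ132_def ab using o cm
              by (intro exI[of _ a] exI[of _ "m-1"] exI[of _ c]) simp
            then show False using q1 unfolding Qa_def by simp
          qed
        qed
      qed
      have n213: "\<not> occ213 \<tau>"
      proof
        assume "occ213 \<tau>"
        then obtain a b c where o: "subseq [a,b,c] \<tau>" "b<a" "a<c" unfolding occ213_def by blast
        have sabc: "a \<in> set \<tau>" "b \<in> set \<tau>" "c \<in> set \<tau>" using subseq_set[OF o(1)] by auto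
        from o(1) have "subseq [a,b,c] ((\<alpha>' @ [m-1]) @ m # \<beta>)" using t2 by simp
        from sub_split[OF this] show False
        proof
          assume "subseq [a,b,c] ((\<alpha>' @ [m-1]) @ \<beta>)"
          then have "occ213 (\<alpha> @ \<beta>)" unfolding occ213_def aeq using o by auto
          then show False using q1 unfolding Qa_def by simp
        next
          assume "\<exists>u1 u2. [a,b,c] = u1 @ m # u2 \<and> subseq u1 (\<alpha>' @ [m-1]) \<and> subseq u2 \<beta>"
          then obtain u1 u2 where u: "[a,b,c] = u1 @ m # u2" "subseq u1 (\<alpha>' @ [m-1])" "subseq u2 \<beta>" by blast
          from u(1) have "(u1 = [] \<and> a = m \<and> u2 = [b,c]) \<or> (u1 = [a] \<and> b = m \<and> u2 = [c]) \<or> (u1 = [a,b] \<and> c = m \<and> u2 = [])"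
            by (simp only: list3_split)
          then show False
          proof (elim disjE conjE)
            assume "a = m" then show False using o le sabc by force
          next
            assume "b = m" then show False using o le sabc by force
          next
            assume u1: "u1 = [a,b]" and cm: "c = m" and u2: "u2 = []"
            from u(2) u1 have "subseq [a,b] (\<alpha>' @ [m-1])" by simp
            then obtain w1 w2 where w: "[a,b] = w1 @ w2" "subseq w1 \<alpha>'" "subseq w2 [m-1]" by (rule subseq_appendE)
            from subseq_single[OF w(3)] have "w2 = [] \<or> w2 = [m-1]" .
            then show False
            proof
              assume "w2 = [m-1]"
              then have "w1 = [a]" "b = m - 1" using w(1) by auto
              then have "a \<in> set \<alpha>'" using w(2) by (simp add: subseq_singleton_left)
              then have "a \<noteq> m" using mA' by auto
              moreover have "a \<le> m" using le sabc by simp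
              ultimately show False using o \<open>b = m - 1\<close> by simp
            next
              assume "w2 = []"
              then have s1: "subseq [a,b] \<alpha>'" using w by simp
              then have "a \<in> set \<alpha>'" using subseq_set by fastforce
              then have "a \<noteq> m - 1" using m1A by auto
              then have am: "a < m - 1" using o cm by simp
              have s2: "subseq [m-1] ((m-1) # \<beta>)" by simp
              have "subseq ([a,b] @ [m-1]) (\<alpha>' @ (m-1) # \<beta>)" by (rule list_emb_append_mono[OF s1 s2])
              then have "occ213 (\<alpha> @ \<beta>)" unfolding occ213_def ab using o am
                by (intro exI[of _ a] exI[of _ b] exI[of _ "m-1"]) simp
              then show False using q1 unfolding Qa_def by simp
            qed
          qed
        qed
      qed
      show ?thesis unfolding Qa_def using n132 n213 by simp
    qed
  qed
qed


fun ins_after :: "nat \<Rightarrow> nat \<Rightarrow> nat list \<Rightarrow> nat list" where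
  "ins_after y z [] = []"
| "ins_after y z (x # xs) = (if x = y then x # z # xs else x # ins_after y z xs)"

lemma ins_after_app: "y \<notin> set \<alpha> \<Longrightarrow> ins_after y z (\<alpha> @ y # \<beta>) = \<alpha> @ y # z # \<beta>"
  by (induction \<alpha>) auto

definition Av :: "nat \<Rightarrow> nat list set" where "Av m = {\<tau> \<in> perms_of m. Qa \<tau>}"

lemma perms_ofI: "distinct s \<Longrightarrow> set s = {1..n} \<Longrightarrow> s \<in> perms_of n"
  unfolding perms_of_def by simp
lemma perms_ofD: "s \<in> perms_of n \<Longrightarrow> distinct s \<and> set s = {1..n}"
  unfolding perms_of_def by simp

lemma filter_not_in: "m \<notin> set xs \<Longrightarrow> filter (\<lambda>v. v \<noteq> m) xs = xs"
  by (induction xs) auto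

lemma Av_step:
  assumes m2: "m \<ge> 2"
  shows "bij_betw (\<lambda>\<tau>. (filter (\<lambda>v. v \<noteq> m) \<tau>, hd \<tau> = m)) (Av m) (Av (m-1) \<times> UNIV)"
proof (rule bij_betw_byWitness[where f' = "\<lambda>(\<tau>', b). if b then m # \<tau>' else ins_after (m-1) m \<tau>'"])
  show "\<forall>\<tau>\<in>Av m. (\<lambda>(\<tau>', b). if b then m # \<tau>' else ins_after (m-1) m \<tau>') (filter (\<lambda>v. v \<noteq> m) \<tau>, hd \<tau> = m) = \<tau>"
  proof
    fix \<tau> assume t: "\<tau> \<in> Av m"
    then have d: "distinct \<tau>" and st: "set \<tau> = {1..m}" and q: "Qa \<tau>" unfolding Av_def perms_of_def by auto
    have "m \<in> set \<tau>" using st m2 by auto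
    then obtain \<alpha> \<beta> where tau: "\<tau> = \<alpha> @ m # \<beta>" by (meson split_list)
    have mA: "m \<notin> set \<alpha>" and mB: "m \<notin> set \<beta>" using d tau by auto
    have f: "filter (\<lambda>v. v \<noteq> m) \<tau> = \<alpha> @ \<beta>" using tau mA mB by (simp add: filter_not_in)
    have qa: "\<alpha> = [] \<or> last \<alpha> = m - 1" using QA[OF tau d st m2] q by simp
    show "(\<lambda>(\<tau>', b). if b then m # \<tau>' else ins_after (m-1) m \<tau>') (filter (\<lambda>v. v \<noteq> m) \<tau>, hd \<tau> = m) = \<tau>"
    proof (cases "\<alpha> = []")
      case True
      then show ?thesis using f tau by simp
    next
      case False
      then have "hd \<alpha> \<in> set \<alpha>" by simp
      then have hd: "hd \<tau> \<noteq> m" using tau mA False by (auto simp add: hd_append)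
      have la: "last \<alpha> = m - 1" using qa False by simp
      define \<alpha>' where "\<alpha>' = butlast \<alpha>"
      have aeq: "\<alpha> = \<alpha>' @ [m-1]" using False la unfolding \<alpha>'_def by (metis append_butlast_last_id)
      have "distinct (\<alpha>' @ (m-1) # m # \<beta>)" using d tau aeq by simp
      then have m1: "m - 1 \<notin> set \<alpha>'" by simp
      have "ins_after (m-1) m (\<alpha> @ \<beta>) = \<tau>" using ins_after_app[OF m1, of m \<beta>] aeq tau by simp
      then show ?thesis using f hd by simp
    qed
  qed
next
  show "\<forall>p\<in>Av (m-1) \<times> UNIV. (\<lambda>\<tau>. (filter (\<lambda>v. v \<noteq> m) \<tau>, hd \<tau> = m)) ((\<lambda>(\<tau>', b). if b then m # \<tau>' else ins_after (m-1) m \<tau>') p) = p"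
  proof
    fix p assume p: "p \<in> Av (m-1) \<times> (UNIV :: bool set)"
    obtain \<tau>' b where pe: "p = (\<tau>', b)" by (cases p)
    have t: "\<tau>' \<in> Av (m-1)" using p pe by simp
    then have d: "distinct \<tau>'" and st: "set \<tau>' = {1..m-1}" unfolding Av_def perms_of_def by auto
    have mn: "m \<notin> set \<tau>'" using st by auto
    show "(\<lambda>\<tau>. (filter (\<lambda>v. v \<noteq> m) \<tau>, hd \<tau> = m)) ((\<lambda>(\<tau>', b). if b then m # \<tau>' else ins_after (m-1) m \<tau>') p) = p"
    proof (cases b)
      case True
      then show ?thesis using pe mn by (simp add: filter_not_in)
    next
      case False
      have "m - 1 \<in> set \<tau>'" using st m2 by auto
      then obtain \<alpha> \<beta> where tau: "\<tau>' = \<alpha> @ (m-1) # \<beta>" by (meson split_list)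
      have m1: "m - 1 \<notin> set \<alpha>" using d tau by simp
      have ia: "ins_after (m-1) m \<tau>' = \<alpha> @ (m-1) # m # \<beta>" using ins_after_app[OF m1] tau by simp
      have mA: "m \<notin> set \<alpha>" and mB: "m \<notin> set \<beta>" using mn tau by auto
      have f: "filter (\<lambda>v. v \<noteq> m) (\<alpha> @ (m-1) # m # \<beta>) = \<tau>'" using mA mB m2 tau by (simp add: filter_not_in)
      have h: "hd (\<alpha> @ (m-1) # m # \<beta>) \<noteq> m"
      proof (cases \<alpha>)
        case Nil then show ?thesis using m2 by simp
      next
        case (Cons a l) then show ?thesis using mA by simp
      qed
      show ?thesis using pe False ia f h by simp
    qed
  qed
next
  show "(\<lambda>\<tau>. (filter (\<lambda>v. v \<noteq> m) \<tau>, hd \<tau> = m)) ` Av m \<subseteq> Av (m-1) \<times> UNIV"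
  proof
    fix p assume "p \<in> (\<lambda>\<tau>. (filter (\<lambda>v. v \<noteq> m) \<tau>, hd \<tau> = m)) ` Av m"
    then obtain \<tau> where pe: "p = (filter (\<lambda>v. v \<noteq> m) \<tau>, hd \<tau> = m)" and t: "\<tau> \<in> Av m" by (rule imageE)
    then have d: "distinct \<tau>" and st: "set \<tau> = {1..m}" and q: "Qa \<tau>" unfolding Av_def perms_of_def by auto
    have "m \<in> set \<tau>" using st m2 by auto
    then obtain \<alpha> \<beta> where tau: "\<tau> = \<alpha> @ m # \<beta>" by (meson split_list)
    have mA: "m \<notin> set \<alpha>" and mB: "m \<notin> set \<beta>" using d tau by auto
    have f: "filter (\<lambda>v. v \<noteq> m) \<tau> = \<alpha> @ \<beta>" using tau mA mB by (simp add: filter_not_in)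
    have qa: "Qa (\<alpha> @ \<beta>)" using QA[OF tau d st m2] q by simp
    have "distinct (\<alpha> @ \<beta>)" using d tau by simp
    moreover have "set (\<alpha> @ \<beta>) = {1..m-1}"
    proof -
      have "set (\<alpha> @ \<beta>) = set \<tau> - {m}" using tau mA mB by auto
      also have "\<dots> = {1..m-1}" using st m2 by (intro set_eqI) (simp, linarith)
      finally show ?thesis .
    qed
    ultimately have "\<alpha> @ \<beta> \<in> Av (m-1)" using qa unfolding Av_def perms_of_def by simp
    then show "p \<in> Av (m-1) \<times> UNIV" using pe f by simp
  qed
next
  show "(\<lambda>(\<tau>', b). if b then m # \<tau>' else ins_after (m-1) m \<tau>') ` (Av (m-1) \<times> UNIV) \<subseteq> Av m"
  proof
    fix x assume "x \<in> (\<lambda>(\<tau>', b). if b then m # \<tau>' else ins_after (m-1) m \<tau>') ` (Av (m-1) \<times> UNIV)"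
    then obtain p where xe0: "x = (\<lambda>(\<tau>', b). if b then m # \<tau>' else ins_after (m-1) m \<tau>') p" and p: "p \<in> Av (m-1) \<times> UNIV" by (rule imageE)
    obtain \<tau>' b where pe: "p = (\<tau>', b)" by (cases p)
    have t: "\<tau>' \<in> Av (m-1)" using p pe by simp
    have xe: "x = (if b then m # \<tau>' else ins_after (m-1) m \<tau>')" using xe0 pe by simp
    from t have d: "distinct \<tau>'" and st: "set \<tau>' = {1..m-1}" and q: "Qa \<tau>'" unfolding Av_def perms_of_def by auto
    have mn: "m \<notin> set \<tau>'" using st by auto
    have stm: "insert m {1..m-1} = {1..m}" using m2 by (intro set_eqI) (simp, linarith)
    show "x \<in> Av m"
    proof (cases b)
      case True
      have "\<forall>v\<in>set \<tau>'. v < m" using st m2 by auto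
      then have "Qa (m # \<tau>')" using Qmax q by simp
      moreover have "distinct (m # \<tau>')" using d mn by simp
      moreover have "set (m # \<tau>') = {1..m}" using st stm by simp
      ultimately show ?thesis using True xe unfolding Av_def perms_of_def by simp
    next
      case False
      have "m - 1 \<in> set \<tau>'" using st m2 by auto
      then obtain \<alpha> \<beta> where tau: "\<tau>' = \<alpha> @ (m-1) # \<beta>" by (meson split_list)
      have m1: "m - 1 \<notin> set \<alpha>" using d tau by simp
      have ia: "x = (\<alpha> @ [m-1]) @ m # \<beta>" using ins_after_app[OF m1] tau False xe by simp
      have dx: "distinct x" using ia d mn tau by auto
      have sx: "set x = {1..m}" using ia tau st stm by auto
      have "Qa x" using QA[OF ia dx sx m2] q tau by simp
      then show ?thesis using dx sx unfolding Av_def perms_of_def by simp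
    qed
  qed
qed

lemma single_perm: "distinct s \<Longrightarrow> set s = {x} \<Longrightarrow> s = [x]"
proof -
  assume d: "distinct s" and st: "set s = {x}"
  have "length s = 1" using distinct_card[OF d] st by simp
  then obtain y where "s = [y]" by (metis length_0_conv length_Suc_conv One_nat_def)
  then show "s = [x]" using st by simp
qed

lemma card_Av: "m \<ge> 1 \<Longrightarrow> card (Av m) = 2 ^ (m - 1)"
proof (induction m)
  case 0 then show ?case by simp
next
  case (Suc k)
  show ?case
  proof (cases "k = 0")
    case True
    have "Av 1 = {[1]}"
    proof
      show "Av 1 \<subseteq> {[1]}" unfolding Av_def perms_of_def using single_perm by auto
      show "{[1]} \<subseteq> Av 1" unfolding Av_def perms_of_def using Qa_short[of "[1]"] by auto
    qed
    then show ?thesis using True by simp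
  next
    case False
    have "bij_betw (\<lambda>\<tau>. (filter (\<lambda>v. v \<noteq> Suc k) \<tau>, hd \<tau> = Suc k)) (Av (Suc k)) (Av (Suc k - 1) \<times> UNIV)"
      using Av_step[of "Suc k"] False by simp
    then have "card (Av (Suc k)) = card (Av k \<times> (UNIV :: bool set))" using bij_betw_same_card by fastforce
    also have "\<dots> = card (Av k) * 2" by (simp add: card_cartesian_product)
    also have "\<dots> = 2 ^ (k - 1) * 2" using Suc.IH False by simp
    also have "\<dots> = 2 ^ (Suc k - 1)" using False by (cases k) auto
    finally show ?thesis .
  qed
qed


section \<open>Positions and adjacency\<close>

lemma pos_nth: assumes "distinct s" "i < length s" shows "pos s (s ! i) = i"
  unfolding pos_def
proof (rule Least_equality)
  show "i < length s \<and> s ! i = s ! i" using assms by simp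
  fix j assume "j < length s \<and> s ! j = s ! i"
  then have "j = i" using assms nth_eq_iff_index_eq by blast
  then show "i \<le> j" by simp
qed

definition adj :: "nat list \<Rightarrow> nat \<Rightarrow> nat \<Rightarrow> bool" where
  "adj s x y \<longleftrightarrow> (\<exists>\<alpha> \<beta>. s = \<alpha> @ x # y # \<beta>)"

lemma pos_adj:
  assumes d: "distinct s" and x: "x \<in> set s" and y: "y \<in> set s"
  shows "pos s y = pos s x + 1 \<longleftrightarrow> adj s x y"
proof
  obtain i where i: "i < length s" "s ! i = x" using x by (metis in_set_conv_nth)
  obtain j where j: "j < length s" "s ! j = y" using y by (metis in_set_conv_nth)
  have pi: "pos s x = i" using pos_nth[OF d i(1)] i(2) by simp
  have pj: "pos s y = j" using pos_nth[OF d j(1)] j(2) by simp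
  {
    assume "pos s y = pos s x + 1"
    then have ji: "j = Suc i" using pi pj by simp
    have e1: "s = take i s @ s ! i # drop (Suc i) s" using i(1) by (rule id_take_nth_drop)
    have e2: "drop (Suc i) s = s ! Suc i # drop (Suc (Suc i)) s" using j(1) ji by (simp add: Cons_nth_drop_Suc)
    have "s = take i s @ x # y # drop (Suc (Suc i)) s" using e1 e2 i(2) j(2) ji by simp
    then show "adj s x y" unfolding adj_def by blast
  }
  {
    assume "adj s x y"
    then obtain \<alpha> \<beta> where s: "s = \<alpha> @ x # y # \<beta>" unfolding adj_def by blast
    have "s ! length \<alpha> = x" "length \<alpha> < length s" using s by simp_all
    then have "pos s x = length \<alpha>" using pos_nth[OF d] by metis
    moreover have "s ! Suc (length \<alpha>) = y" "Suc (length \<alpha>) < length s" using s by (simp_all add: nth_append)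
    then have "pos s y = Suc (length \<alpha>)" using pos_nth[OF d] by metis
    ultimately show "pos s y = pos s x + 1" by simp
  }
qed

definition S' :: "nat \<Rightarrow> nat \<Rightarrow> nat list set" where
  "S' n l = {s \<in> perms_of n. Pa s \<and> adj s 1 n \<and> s ! 0 = l}"

definition T' :: "nat \<Rightarrow> nat list set" where
  "T' m = {s \<in> perms_of m. Pa s \<and> adj s 1 m}"

lemma t_S': assumes "n \<ge> 1" shows "t n l = card (S' n l)"
proof -
  have "{s \<in> perms_of n. avoids s [1,2,4,3] \<and> avoids s [1,3,2,4] \<and> pos s n = pos s 1 + 1 \<and> s ! 0 = l} = S' n l"
    unfolding S'_def
  proof (rule Collect_cong)
    fix s
    show "(s \<in> perms_of n \<and> avoids s [1,2,4,3] \<and> avoids s [1,3,2,4] \<and> pos s n = pos s 1 + 1 \<and> s ! 0 = l) =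
          (s \<in> perms_of n \<and> Pa s \<and> adj s 1 n \<and> s ! 0 = l)"
    proof (cases "s \<in> perms_of n")
      case True
      then have d: "distinct s" and st: "set s = {1..n}" by (auto dest: perms_ofD)
      have "1 \<in> set s" "n \<in> set s" using st assms by auto
      then have "pos s n = pos s 1 + 1 \<longleftrightarrow> adj s 1 n" using pos_adj[OF d] by blast
      then show ?thesis using P_avoids[of s] True by blast
    qed simp
  qed
  then show ?thesis unfolding t_def S'_def by simp
qed

lemma finite_perms: "finite (perms_of m)"
proof -
  have "perms_of m \<subseteq> {xs. set xs \<subseteq> {1..m} \<and> length xs = m}"
  proof
    fix s assume "s \<in> perms_of m"
    then have d: "distinct s" and st: "set s = {1..m}" by (auto dest: perms_ofD)
    have "length s = m" using distinct_card[OF d] st by simp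
    then show "s \<in> {xs. set xs \<subseteq> {1..m} \<and> length xs = m}" using st by simp
  qed
  moreover have "finite {xs. set xs \<subseteq> {1..m} \<and> length xs = m}" by (rule finite_lists_length_eq) simp
  ultimately show ?thesis by (rule finite_subset)
qed

lemma sum_T':
  assumes n3: "n \<ge> 3"
  shows "(\<Sum>l = 1..n - 2. t (n - 1) l) = card (T' (n - 1))"
proof -
  have tS: "\<And>l. t (n-1) l = card (S' (n-1) l)" using n3 by (intro t_S') simp
  have un: "T' (n-1) = (\<Union>l\<in>{1..n-2}. S' (n-1) l)"
  proof
    show "T' (n-1) \<subseteq> (\<Union>l\<in>{1..n-2}. S' (n-1) l)"
    proof
      fix s assume s: "s \<in> T' (n-1)"
      then have p: "s \<in> perms_of (n-1)" and pa: "Pa s" and ad: "adj s 1 (n-1)" unfolding T'_def by auto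
      then have d: "distinct s" and st: "set s = {1..n-1}" by (auto dest: perms_ofD)
      obtain \<alpha> \<beta> where se: "s = \<alpha> @ 1 # (n-1) # \<beta>" using ad unfolding adj_def by blast
      have "s ! 0 \<in> set s" using se by (intro nth_mem) simp
      then have r1: "s ! 0 \<in> {1..n-1}" using st by simp
      have r2: "s ! 0 \<noteq> n - 1"
      proof (cases \<alpha>)
        case Nil then show ?thesis using se n3 by simp
      next
        case (Cons a l)
        have "n - 1 \<notin> set \<alpha>" using d se by simp
        then show ?thesis using se Cons by auto
      qed
      have "s \<in> S' (n-1) (s ! 0)" using p pa ad unfolding S'_def by simp
      moreover have "s ! 0 \<in> {1..n-2}" using r1 r2 by auto
      ultimately show "s \<in> (\<Union>l\<in>{1..n-2}. S' (n-1) l)" by blast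
    qed
    show "(\<Union>l\<in>{1..n-2}. S' (n-1) l) \<subseteq> T' (n-1)" unfolding S'_def T'_def by auto
  qed
  have fin: "\<forall>l\<in>{1..n-2}. finite (S' (n-1) l)"
    using finite_perms unfolding S'_def by auto
  have disj: "\<forall>i\<in>{1..n-2}. \<forall>j\<in>{1..n-2}. i \<noteq> j \<longrightarrow> S' (n-1) i \<inter> S' (n-1) j = {}"
    unfolding S'_def by auto
  have "card (T' (n-1)) = (\<Sum>l\<in>{1..n-2}. card (S' (n-1) l))"
    unfolding un by (rule card_UN_disjoint[OF _ fin disj]) simp
  then show ?thesis using tS by simp
qed


lemma set_shift_down:
  assumes "set xs = {a+k..b+k}" shows "set (map (\<lambda>v. v - k) xs) = {a..(b::nat)}"
proof (rule set_eqI)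
  fix x
  show "x \<in> set (map (\<lambda>v. v - k) xs) \<longleftrightarrow> x \<in> {a..b}"
  proof
    assume "x \<in> set (map (\<lambda>v. v - k) xs)"
    then obtain v where "v \<in> set xs" "x = v - k" by auto
    then show "x \<in> {a..b}" using assms by (simp; arith)
  next
    assume x: "x \<in> {a..b}"
    then have "x + k \<in> set xs" using assms by simp
    moreover have "x = (x + k) - k" by simp
    ultimately show "x \<in> set (map (\<lambda>v. v - k) xs)" by (metis (no_types, lifting) image_eqI list.set_map)
  qed
qed

lemma set_shift_up:
  assumes "set xs = {a..b}" shows "set (map (\<lambda>v. v + k) xs) = {a+k..(b::nat)+k}"
proof (rule set_eqI)
  fix x
  show "x \<in> set (map (\<lambda>v. v + k) xs) \<longleftrightarrow> x \<in> {a+k..b+k}"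
  proof
    assume "x \<in> set (map (\<lambda>v. v + k) xs)"
    then obtain v where "v \<in> set xs" "x = v + k" by auto
    then show "x \<in> {a+k..b+k}" using assms by simp
  next
    assume x: "x \<in> {a+k..b+k}"
    then have "x - k \<in> set xs" using assms by (simp; arith)
    moreover have "x = (x - k) + k" using x by simp
    ultimately show "x \<in> set (map (\<lambda>v. v + k) xs)" by (metis (no_types, lifting) image_eqI list.set_map)
  qed
qed

lemma distinct_shift_down:
  assumes "distinct xs" "\<forall>v\<in>set xs. k \<le> v" shows "distinct (map (\<lambda>v. v - (k::nat)) xs)"
proof -
  have "inj_on (\<lambda>v. v - k) (set xs)"
  proof (rule inj_onI)
    fix x y assume "x \<in> set xs" "y \<in> set xs" "x - k = y - k"
    moreover then have "k \<le> x" "k \<le> y" using assms(2) by auto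
    ultimately show "x = y" by arith
  qed
  then show ?thesis using assms(1) by (simp add: distinct_map)
qed

lemma distinct_shift_up:
  assumes "distinct xs" shows "distinct (map (\<lambda>v. v + (k::nat)) xs)"
proof -
  have "inj_on (\<lambda>v. v + k) (set xs)" unfolding inj_on_def by simp
  then show ?thesis using assms(1) by (simp add: distinct_map)
qed

lemma ordiso_down: "\<forall>v\<in>S. k \<le> v \<Longrightarrow> ordiso (\<lambda>v. v - (k::nat)) S"
  unfolding ordiso_def by fastforce

lemma ordiso_up: "ordiso (\<lambda>v. v + (k::nat)) S"
  unfolding ordiso_def by simp

lemma map_down_up: "map (\<lambda>v. v - k) (map (\<lambda>v. v + (k::nat)) xs) = xs"
  by (induction xs) auto

lemma map_up_down: "\<forall>v\<in>set xs. k \<le> v \<Longrightarrow> map (\<lambda>v. v + k) (map (\<lambda>v. v - (k::nat)) xs) = xs"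
  by (induction xs) auto

section \<open>Part A: first entry 1\<close>

lemma S1_form:
  assumes "s \<in> S' n 1"
  obtains \<beta> where "s = 1 # n # \<beta>"
proof -
  from assms have d: "distinct s" and ad: "adj s 1 n" and s0: "s ! 0 = 1"
    unfolding S'_def perms_of_def by auto
  obtain \<alpha> \<beta> where se: "s = \<alpha> @ 1 # n # \<beta>" using ad unfolding adj_def by blast
  have "\<alpha> = []"
  proof (cases \<alpha>)
    case (Cons a l)
    have "1 \<notin> set \<alpha>" using d se by simp
    moreover have "s ! 0 = a" using se Cons by simp
    ultimately show ?thesis using s0 Cons by simp
  qed simp
  then show thesis using that se by simp
qed

lemma partA:
  assumes n3: "n \<ge> 3"
  shows "card (S' n 1) = card (Av (n-2))"
proof -
  have "bij_betw (\<lambda>s. map (\<lambda>v. v - 1) (drop 2 s)) (S' n 1) (Av (n-2))"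
  proof (rule bij_betw_byWitness[where f' = "\<lambda>\<tau>. 1 # n # map (\<lambda>v. v + 1) \<tau>"])
    show "\<forall>s\<in>S' n 1. 1 # n # map (\<lambda>v. v + 1) (map (\<lambda>v. v - 1) (drop 2 s)) = s"
    proof
      fix s assume s: "s \<in> S' n 1"
      then obtain \<beta> where se: "s = 1 # n # \<beta>" by (rule S1_form)
      from s have d: "distinct s" and st: "set s = {1..n}" unfolding S'_def perms_of_def by auto
      have "\<forall>v\<in>set \<beta>. 1 \<le> v" using st se by auto
      then show "1 # n # map (\<lambda>v. v + 1) (map (\<lambda>v. v - 1) (drop 2 s)) = s"
        using se map_up_down[of \<beta> 1] by simp
    qed
  next
    show "\<forall>\<tau>\<in>Av (n-2). map (\<lambda>v. v - 1) (drop 2 (1 # n # map (\<lambda>v. v + 1) \<tau>)) = \<tau>"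
      using map_down_up[of 1] by simp
  next
    show "(\<lambda>s. map (\<lambda>v. v - 1) (drop 2 s)) ` S' n 1 \<subseteq> Av (n-2)"
    proof
      fix x assume "x \<in> (\<lambda>s. map (\<lambda>v. v - 1) (drop 2 s)) ` S' n 1"
      then obtain s where xe: "x = map (\<lambda>v. v - 1) (drop 2 s)" and s: "s \<in> S' n 1" by (rule imageE)
      then obtain \<beta> where se: "s = 1 # n # \<beta>" by (metis S1_form)
      from s have d: "distinct s" and st: "set s = {1..n}" and pa: "Pa s" unfolding S'_def perms_of_def by auto
      have xb: "x = map (\<lambda>v. v - 1) \<beta>" using xe se by simp
      have db: "distinct \<beta>" using d se by simp
      have sb: "set \<beta> = {1+1..(n-2)+1}"
      proof -
        have "set \<beta> = set s - {1, n}" using d se by auto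
        also have "\<dots> = {1+1..(n-2)+1}" using st n3 by (intro set_eqI) (simp, linarith)
        finally show ?thesis .
      qed
      have ge: "\<forall>v\<in>set \<beta>. 1 \<le> v" using sb by simp
      have lt: "\<forall>v\<in>set \<beta>. v < n" using sb n3 by auto
      have "filter (\<lambda>v. 1 < v) (n # \<beta>) = n # \<beta>" using sb n3 by (intro filter_True) auto
      then have "Qa (n # \<beta>)" using pa L1[of 1 "n # \<beta>"] se by simp
      then have "Qa \<beta>" using Qmax[OF lt] by simp
      then have q: "Qa x" unfolding xb using Qa_map[OF ordiso_down[OF ge]] by simp
      have "distinct x" unfolding xb by (rule distinct_shift_down[OF db ge])
      moreover have "set x = {1..n-2}" unfolding xb by (rule set_shift_down[OF sb])
      ultimately show "x \<in> Av (n-2)" using q unfolding Av_def perms_of_def by simp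
    qed
  next
    show "(\<lambda>\<tau>. 1 # n # map (\<lambda>v. v + 1) \<tau>) ` Av (n-2) \<subseteq> S' n 1"
    proof
      fix x assume "x \<in> (\<lambda>\<tau>. 1 # n # map (\<lambda>v. v + 1) \<tau>) ` Av (n-2)"
      then obtain \<tau> where xe: "x = 1 # n # map (\<lambda>v. v + 1) \<tau>" and t: "\<tau> \<in> Av (n-2)" by (rule imageE)
      from t have d: "distinct \<tau>" and st: "set \<tau> = {1..n-2}" and q: "Qa \<tau>" unfolding Av_def perms_of_def by auto
      define w where "w = map (\<lambda>v. v + 1) \<tau>"
      have sw: "set w = {1+1..(n-2)+1}" unfolding w_def by (rule set_shift_up[OF st])
      have dw: "distinct w" unfolding w_def by (rule distinct_shift_up[OF d])
      have qw: "Qa w" unfolding w_def using Qa_map[OF ordiso_up, of 1 \<tau>] q by simp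
      have lt: "\<forall>v\<in>set w. v < n" using sw n3 by auto
      have qnw: "Qa (n # w)" using Qmax[OF lt] qw by simp
      have "filter (\<lambda>v. 1 < v) (n # w) = n # w" using sw n3 by (intro filter_True) auto
      then have pa: "Pa x" using L1[of 1 "n # w"] qnw Qa_Pa[OF qnw] xe w_def by simp
      have dx: "distinct x" using dw sw n3 xe w_def by auto
      have sx: "set x = {1..n}"
      proof -
        have "set x = insert 1 (insert n (set w))" using xe w_def by simp
        also have "\<dots> = {1..n}" unfolding sw using n3 by (intro set_eqI) (simp, linarith)
        finally show ?thesis .
      qed
      have "adj x 1 n" unfolding adj_def using xe by (intro exI[of _ "[]"] exI[of _ w]) (simp add: w_def)
      then show "x \<in> S' n 1" using dx sx pa xe unfolding S'_def perms_of_def by simp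
    qed
  qed
  then show ?thesis by (rule bij_betw_same_card)
qed


section \<open>Part B: first entry 2\<close>

fun ins_before :: "nat \<Rightarrow> nat \<Rightarrow> nat list \<Rightarrow> nat list" where
  "ins_before y z [] = []"
| "ins_before y z (x # xs) = (if x = y then z # x # xs else x # ins_before y z xs)"

lemma ins_before_app: "y \<notin> set \<alpha> \<Longrightarrow> ins_before y z (\<alpha> @ y # \<beta>) = \<alpha> @ z # y # \<beta>"
  by (induction \<alpha>) auto

lemma S2_form:
  assumes "s \<in> S' n 2"
  obtains \<alpha> \<beta> where "s = 2 # \<alpha> @ 1 # n # \<beta>"
proof -
  from assms have ad: "adj s 1 n" and s0: "s ! 0 = 2"
    unfolding S'_def perms_of_def by auto
  obtain \<alpha>0 \<beta> where se: "s = \<alpha>0 @ 1 # n # \<beta>" using ad unfolding adj_def by blast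
  show thesis
  proof (cases \<alpha>0)
    case Nil
    then show ?thesis using se s0 by simp
  next
    case (Cons a \<alpha>)
    then have "a = 2" using se s0 by simp
    then show ?thesis using that[of \<alpha> \<beta>] se Cons by simp
  qed
qed

lemma partB:
  assumes n3: "n \<ge> 3"
  shows "card (S' n 2) = card (Av (n-2))"
proof -
  have "bij_betw (\<lambda>s. map (\<lambda>v. v - 2) (filter (\<lambda>v. 2 < v) s)) (S' n 2) (Av (n-2))"
  proof (rule bij_betw_byWitness[where f' = "\<lambda>\<tau>. 2 # ins_before n 1 (map (\<lambda>v. v + 2) \<tau>)"])
    show "\<forall>s\<in>S' n 2. 2 # ins_before n 1 (map (\<lambda>v. v + 2) (map (\<lambda>v. v - 2) (filter (\<lambda>v. 2 < v) s))) = s"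
    proof
      fix s assume s: "s \<in> S' n 2"
      then obtain \<alpha> \<beta> where se: "s = 2 # \<alpha> @ 1 # n # \<beta>" by (rule S2_form)
      from s have d: "distinct s" and st: "set s = {1..n}" unfolding S'_def perms_of_def by auto
      have ge: "\<forall>v\<in>set \<alpha> \<union> set \<beta>. 2 < v"
      proof
        fix v assume v: "v \<in> set \<alpha> \<union> set \<beta>"
        then have "v \<in> set s" "v \<noteq> 1" "v \<noteq> 2" using se d by auto
        then show "2 < v" using st by auto
      qed
      have f: "filter (\<lambda>v. 2 < v) s = \<alpha> @ n # \<beta>" using se ge n3 by simp
      have ge2: "\<forall>v\<in>set (\<alpha> @ n # \<beta>). 2 \<le> v"
      proof
        fix v assume "v \<in> set (\<alpha> @ n # \<beta>)"
        then have "v \<in> set \<alpha> \<union> set \<beta> \<or> v = n" by auto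
        then show "2 \<le> v" using ge n3 less_imp_le by auto
      qed
      have nA: "n \<notin> set \<alpha>" using d se by simp
      show "2 # ins_before n 1 (map (\<lambda>v. v + 2) (map (\<lambda>v. v - 2) (filter (\<lambda>v. 2 < v) s))) = s"
      proof -
        have "2 # ins_before n 1 (map (\<lambda>v. v + 2) (map (\<lambda>v. v - 2) (filter (\<lambda>v. 2 < v) s)))
              = 2 # ins_before n 1 (\<alpha> @ n # \<beta>)" by (simp only: f map_up_down[OF ge2])
        also have "\<dots> = s" using ins_before_app[OF nA] se by simp
        finally show ?thesis .
      qed
    qed
  next
    show "\<forall>\<tau>\<in>Av (n-2). map (\<lambda>v. v - 2) (filter (\<lambda>v. 2 < v) (2 # ins_before n 1 (map (\<lambda>v. v + 2) \<tau>))) = \<tau>"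
    proof
      fix \<tau> assume t: "\<tau> \<in> Av (n-2)"
      from t have d: "distinct \<tau>" and st: "set \<tau> = {1..n-2}" unfolding Av_def perms_of_def by auto
      define w where "w = map (\<lambda>v. v + 2) \<tau>"
      have sw: "set w = {1+2..(n-2)+2}" unfolding w_def by (rule set_shift_up[OF st])
      have dw: "distinct w" unfolding w_def by (rule distinct_shift_up[OF d])
      have "n \<in> set w" using sw n3 by simp
      then obtain \<alpha> \<beta> where we: "w = \<alpha> @ n # \<beta>" by (meson split_list)
      have nA: "n \<notin> set \<alpha>" using dw we by simp
      have ib: "ins_before n 1 w = \<alpha> @ 1 # n # \<beta>" using ins_before_app[OF nA] we by simp
      have gt: "\<forall>v\<in>set w. 2 < v" using sw by simp
      have "filter (\<lambda>v. 2 < v) (2 # \<alpha> @ 1 # n # \<beta>) = \<alpha> @ n # \<beta>" using gt we by simp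
      then have "filter (\<lambda>v. 2 < v) (2 # ins_before n 1 w) = w" using ib we by simp
      then show "map (\<lambda>v. v - 2) (filter (\<lambda>v. 2 < v) (2 # ins_before n 1 (map (\<lambda>v. v + 2) \<tau>))) = \<tau>"
        using map_down_up[of 2 \<tau>] unfolding w_def by simp
    qed
  next
    show "(\<lambda>s. map (\<lambda>v. v - 2) (filter (\<lambda>v. 2 < v) s)) ` S' n 2 \<subseteq> Av (n-2)"
    proof
      fix x assume "x \<in> (\<lambda>s. map (\<lambda>v. v - 2) (filter (\<lambda>v. 2 < v) s)) ` S' n 2"
      then obtain s where xe: "x = map (\<lambda>v. v - 2) (filter (\<lambda>v. 2 < v) s)" and s: "s \<in> S' n 2" by (rule imageE)
      from s obtain \<alpha> \<beta> where se: "s = 2 # \<alpha> @ 1 # n # \<beta>" by (rule S2_form)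
      from s have d: "distinct s" and st: "set s = {1..n}" and pa: "Pa s" unfolding S'_def perms_of_def by auto
      have ge: "\<forall>v\<in>set \<alpha> \<union> set \<beta>. 2 < v"
      proof
        fix v assume v: "v \<in> set \<alpha> \<union> set \<beta>"
        then have "v \<in> set s" "v \<noteq> 1" "v \<noteq> 2" using se d by auto
        then show "2 < v" using st by auto
      qed
      define w where "w = \<alpha> @ n # \<beta>"
      have f: "filter (\<lambda>v. 2 < v) s = w" using se ge n3 unfolding w_def by simp
      have f2: "filter (\<lambda>v. 2 < v) (\<alpha> @ 1 # n # \<beta>) = w" using ge n3 unfolding w_def by simp
      have ge2: "\<forall>v\<in>set w. 2 \<le> v"
      proof
        fix v assume "v \<in> set w"
        then have "v \<in> set \<alpha> \<union> set \<beta> \<or> v = n" unfolding w_def by auto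
        then show "2 \<le> v" using ge n3 less_imp_le by auto
      qed
      have dw: "distinct w" using d se unfolding w_def by auto
      have sw: "set w = {1+2..(n-2)+2}"
      proof -
        have "set w = set s - {1, 2}" using d se unfolding w_def by auto
        also have "\<dots> = {1+2..(n-2)+2}" using st n3 by (intro set_eqI) (simp, linarith)
        finally show ?thesis .
      qed
      have "Qa w" using pa L1[of 2 "\<alpha> @ 1 # n # \<beta>"] se f2 by simp
      then have q: "Qa x" unfolding xe f using Qa_map[OF ordiso_down[OF ge2]] by simp
      have "distinct x" unfolding xe f by (rule distinct_shift_down[OF dw ge2])
      moreover have "set x = {1..n-2}" unfolding xe f by (rule set_shift_down[OF sw])
      ultimately show "x \<in> Av (n-2)" using q unfolding Av_def perms_of_def by simp
    qed
  next
    show "(\<lambda>\<tau>. 2 # ins_before n 1 (map (\<lambda>v. v + 2) \<tau>)) ` Av (n-2) \<subseteq> S' n 2"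
    proof
      fix x assume "x \<in> (\<lambda>\<tau>. 2 # ins_before n 1 (map (\<lambda>v. v + 2) \<tau>)) ` Av (n-2)"
      then obtain \<tau> where xe: "x = 2 # ins_before n 1 (map (\<lambda>v. v + 2) \<tau>)" and t: "\<tau> \<in> Av (n-2)" by (rule imageE)
      from t have d: "distinct \<tau>" and st: "set \<tau> = {1..n-2}" and q: "Qa \<tau>" unfolding Av_def perms_of_def by auto
      define w where "w = map (\<lambda>v. v + 2) \<tau>"
      have sw: "set w = {1+2..(n-2)+2}" unfolding w_def by (rule set_shift_up[OF st])
      have dw: "distinct w" unfolding w_def by (rule distinct_shift_up[OF d])
      have qw: "Qa w" unfolding w_def using Qa_map[OF ordiso_up, of 2 \<tau>] q by simp
      have "n \<in> set w" using sw n3 by simp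
      then obtain \<alpha> \<beta> where we: "w = \<alpha> @ n # \<beta>" by (meson split_list)
      have nA: "n \<notin> set \<alpha>" using dw we by simp
      have xe2: "x = 2 # \<alpha> @ 1 # n # \<beta>" using ins_before_app[OF nA] we xe unfolding w_def by simp
      have gt: "\<forall>v\<in>set w. 2 < v" using sw by simp
      have f2: "filter (\<lambda>v. 2 < v) (\<alpha> @ 1 # n # \<beta>) = w" using gt we by simp
      have gt1: "\<forall>v\<in>set \<alpha> \<union> set (n # \<beta>). 1 < v"
      proof
        fix v assume "v \<in> set \<alpha> \<union> set (n # \<beta>)"
        then have "v \<in> set w" using we by auto
        then have "2 < v" using gt by blast
        then show "1 < v" by simp
      qed
      have "Qa (\<alpha> @ n # \<beta>)" using qw we by simp
      then have p1: "Pa (\<alpha> @ 1 # n # \<beta>)" using min_ins[OF gt1] by simp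
      have pa: "Pa x" using L1[of 2 "\<alpha> @ 1 # n # \<beta>"] p1 f2 qw xe2 by simp
      have sx: "set x = {1..n}"
      proof -
        have "set x = insert 2 (insert 1 (set w))" using xe2 we by auto
        also have "\<dots> = {1..n}" unfolding sw using n3 by (intro set_eqI) (simp, linarith)
        finally show ?thesis .
      qed
      have dx: "distinct x"
      proof -
        have "1 \<notin> set w" "2 \<notin> set w" using sw by auto
        then show ?thesis using dw we xe2 by auto
      qed
      have "adj x 1 n" unfolding adj_def using xe2 by (intro exI[of _ "2 # \<alpha>"] exI[of _ \<beta>]) simp
      then show "x \<in> S' n 2" using dx sx pa xe2 unfolding S'_def perms_of_def by simp
    qed
  qed
  then show ?thesis by (rule bij_betw_same_card)
qed


section \<open>Parts C and D: first entry n-1 or n-2\<close>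

lemma Sc_form:
  assumes "s \<in> S' n c" "c \<noteq> 1"
  obtains \<alpha> \<beta> where "s = c # \<alpha> @ 1 # n # \<beta>"
proof -
  from assms have ad: "adj s 1 n" and s0: "s ! 0 = c"
    unfolding S'_def perms_of_def by auto
  obtain \<alpha>0 \<beta> where se: "s = \<alpha>0 @ 1 # n # \<beta>" using ad unfolding adj_def by blast
  show thesis
  proof (cases \<alpha>0)
    case Nil
    then show ?thesis using se s0 assms(2) by simp
  next
    case (Cons a \<alpha>)
    then have "a = c" using se s0 by simp
    then show ?thesis using that[of \<alpha> \<beta>] se Cons by simp
  qed
qed

lemma short_filter:
  fixes xs :: "nat list" and c n :: nat
  assumes "distinct xs" "set xs \<subseteq> {1..n}" "n \<le> c + 2"
  shows "length (filter (\<lambda>v. c < v) xs) < 3"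
proof -
  have d: "distinct (filter (\<lambda>v. c < v) xs)" using assms(1) by simp
  have "set (filter (\<lambda>v. c < v) xs) \<subseteq> {Suc c..n}" using assms(2) by auto
  then have "card (set (filter (\<lambda>v. c < v) xs)) \<le> card {Suc c..n}" by (intro card_mono) simp_all
  then have "length (filter (\<lambda>v. c < v) xs) \<le> n - c" using distinct_card[OF d] by simp
  then show ?thesis using assms(3) by simp
qed

lemma partCD:
  assumes n3: "n \<ge> 3" and c2: "2 \<le> c" and cn: "c \<le> n - 1" and cn2: "n - 2 \<le> c"
  shows "card (S' n c) = card (T' (n-1))"
proof -
  define g where "g = (\<lambda>v::nat. if c < v then v - 1 else v)"
  define g' where "g' = (\<lambda>u::nat. if c \<le> u then u + 1 else u)"
  have gg': "\<And>u. g (g' u) = u" unfolding g_def g'_def by simp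
  have g'g: "\<And>v. v \<noteq> c \<Longrightarrow> g' (g v) = v" unfolding g_def g'_def by auto
  have g1: "g 1 = 1" "g n = n - 1" using c2 cn n3 unfolding g_def by auto
  have g'1: "g' 1 = 1" "g' (n - 1) = n" using c2 cn n3 unfolding g'_def by auto
  have g'c: "\<And>u. g' u \<noteq> c" unfolding g'_def by auto
  have c1: "c \<noteq> 1" using c2 by simp
  have "bij_betw (\<lambda>s. map g (tl s)) (S' n c) (T' (n-1))"
  proof (rule bij_betw_byWitness[where f' = "\<lambda>\<pi>. c # map g' \<pi>"])
    show "\<forall>s\<in>S' n c. c # map g' (map g (tl s)) = s"
    proof
      fix s assume s: "s \<in> S' n c"
      then obtain \<alpha> \<beta> where se: "s = c # \<alpha> @ 1 # n # \<beta>" using c1 by (metis Sc_form)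
      from s have d: "distinct s" unfolding S'_def perms_of_def by auto
      have "\<forall>v\<in>set (tl s). v \<noteq> c" using d se by auto
      then have "map g' (map g (tl s)) = tl s" unfolding map_map by (intro map_idI) (auto simp: g'g)
      then show "c # map g' (map g (tl s)) = s" using se by simp
    qed
  next
    show "\<forall>\<pi>\<in>T' (n-1). map g (tl (c # map g' \<pi>)) = \<pi>"
      by (simp add: gg' map_idI)
  next
    show "(\<lambda>s. map g (tl s)) ` S' n c \<subseteq> T' (n-1)"
    proof
      fix x assume "x \<in> (\<lambda>s. map g (tl s)) ` S' n c"
      then obtain s where xe: "x = map g (tl s)" and s: "s \<in> S' n c" by (rule imageE)
      from s c1 obtain \<alpha> \<beta> where se: "s = c # \<alpha> @ 1 # n # \<beta>" by (metis Sc_form)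
      from s have d: "distinct s" and st: "set s = {1..n}" and pa: "Pa s" unfolding S'_def perms_of_def by auto
      define r where "r = \<alpha> @ 1 # n # \<beta>"
      have xr: "x = map g r" using xe se unfolding r_def by simp
      have dr: "distinct r" and cr: "c \<notin> set r" using d se unfolding r_def by auto
      have sr: "set r = set s - {c}" using d se unfolding r_def by auto
      have pr: "Pa r" using pa se L1[of c r] unfolding r_def by simp
      have oi: "ordiso g (set r)" unfolding ordiso_def
      proof (intro ballI)
        fix u v assume "u \<in> set r" "v \<in> set r"
        then have "u \<noteq> c" "v \<noteq> c" using cr by auto
        then show "(g u < g v) = (u < v)" unfolding g_def by auto
      qed
      have px: "Pa x" unfolding xr using Pa_map[OF oi] pr by simp
      have inj: "inj_on g (set r)"
      proof (rule inj_onI)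
        fix u v assume "u \<in> set r" "v \<in> set r" "g u = g v"
        then show "u = v" using cr g'g by metis
      qed
      have dx: "distinct x" unfolding xr using dr inj by (simp add: distinct_map)
      have sx: "set x = {1..n-1}"
      proof (rule set_eqI)
        fix y
        show "y \<in> set x \<longleftrightarrow> y \<in> {1..n-1}"
        proof
          assume "y \<in> set x"
          then obtain v where v: "v \<in> set r" "y = g v" unfolding xr by auto
          then have "v \<in> {1..n}" "v \<noteq> c" using sr st by auto
          then show "y \<in> {1..n-1}" using v(2) cn c2 unfolding g_def by auto
        next
          assume y: "y \<in> {1..n-1}"
          have "g' y \<in> {1..n}" using y unfolding g'_def by auto
          then have "g' y \<in> set r" using sr st g'c by auto
          moreover have "y = g (g' y)" by (simp add: gg')
          ultimately show "y \<in> set x" unfolding xr by auto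
        qed
      qed
      have "x = map g \<alpha> @ 1 # (n-1) # map g \<beta>" unfolding xr r_def using g1 by simp
      then have "adj x 1 (n-1)" unfolding adj_def by blast
      then show "x \<in> T' (n-1)" using dx sx px unfolding T'_def perms_of_def by simp
    qed
  next
    show "(\<lambda>\<pi>. c # map g' \<pi>) ` T' (n-1) \<subseteq> S' n c"
    proof
      fix x assume "x \<in> (\<lambda>\<pi>. c # map g' \<pi>) ` T' (n-1)"
      then obtain \<pi> where xe: "x = c # map g' \<pi>" and p: "\<pi> \<in> T' (n-1)" by (rule imageE)
      from p have d: "distinct \<pi>" and st: "set \<pi> = {1..n-1}" and pa: "Pa \<pi>" and ad: "adj \<pi> 1 (n-1)"
        unfolding T'_def perms_of_def by auto
      obtain \<alpha> \<beta> where pe: "\<pi> = \<alpha> @ 1 # (n-1) # \<beta>" using ad unfolding adj_def by blast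
      have oi: "ordiso g' (set \<pi>)" unfolding ordiso_def g'_def by auto
      have p1: "Pa (map g' \<pi>)" using Pa_map[OF oi] pa by simp
      have inj: "inj_on g' (set \<pi>)"
      proof (rule inj_onI)
        fix u v assume "u \<in> set \<pi>" "v \<in> set \<pi>" "g' u = g' v"
        then show "u = v" using gg' by metis
      qed
      have dm: "distinct (map g' \<pi>)" using d inj by (simp add: distinct_map)
      have cm: "c \<notin> set (map g' \<pi>)" using g'c by auto
      have dx: "distinct x" using xe dm cm by simp
      have sm: "set (map g' \<pi>) \<subseteq> {1..n}" using st cn unfolding g'_def by auto
      have "length (filter (\<lambda>v. c < v) (map g' \<pi>)) < 3" using short_filter[OF dm sm] cn2 by simp
      then have q: "Qa (filter (\<lambda>v. c < v) (map g' \<pi>))" by (rule Qa_short)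
      have px: "Pa x" using L1[of c "map g' \<pi>"] p1 q xe by simp
      have sx: "set x = {1..n}"
      proof (rule set_eqI)
        fix y
        show "y \<in> set x \<longleftrightarrow> y \<in> {1..n}"
        proof
          assume "y \<in> set x"
          then show "y \<in> {1..n}" using xe sm c2 cn by auto
        next
          assume y: "y \<in> {1..n}"
          show "y \<in> set x"
          proof (cases "y = c")
            case True then show ?thesis using xe by simp
          next
            case False
            then have "g y \<in> set \<pi>" using y st cn c2 unfolding g_def by auto
            moreover have "g' (g y) = y" using g'g False by simp
            ultimately show ?thesis using xe by (metis imageI list.set_intros(2) list.set_map)
          qed
        qed
      qed
      have "x = (c # map g' \<alpha>) @ 1 # n # map g' \<beta>" using xe pe g'1 by simp
      then have "adj x 1 n" unfolding adj_def by blast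
      moreover have "x ! 0 = c" using xe by simp
      ultimately show "x \<in> S' n c" using dx sx px unfolding S'_def perms_of_def by simp
    qed
  qed
  then show ?thesis by (rule bij_betw_same_card)
qed

theorem lemma5p4:
  fixes n :: nat
  assumes "n \<ge> 3"
  shows "t n 1 = 2 ^ (n - 3) \<and> t n 2 = 2 ^ (n - 3) \<and>
         t n (n - 2) = (\<Sum>l = 1..n - 2. t (n - 1) l) \<and>
         t n (n - 1) = (\<Sum>l = 1..n - 2. t (n - 1) l)"
proof -
  have n1: "n \<ge> 1" using assms by simp
  have av: "card (Av (n-2)) = 2 ^ (n - 3)" using card_Av[of "n-2"] assms by simp
  have A: "t n 1 = 2 ^ (n - 3)" using t_S'[OF n1] partA[OF assms] av by simp
  have B: "t n 2 = 2 ^ (n - 3)" using t_S'[OF n1] partB[OF assms] av by simp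
  have C: "t n (n - 1) = (\<Sum>l = 1..n - 2. t (n - 1) l)"
    using t_S'[OF n1] partCD[OF assms, of "n-1"] sum_T'[OF assms] assms by simp
  have D: "t n (n - 2) = (\<Sum>l = 1..n - 2. t (n - 1) l)"
  proof (cases "n = 3")
    case True
    then show ?thesis using A B C by simp
  next
    case False
    then show ?thesis
      using t_S'[OF n1] partCD[OF assms, of "n-2"] sum_T'[OF assms] assms by simp
  qed
  show ?thesis using A B C D by simp
qed

end
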